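(* Let $K$ be a positive integer and let $m,\ell$ be integers with $0\le \ell\le 2K$ and $m\equiv \ell \pmod 2$. Then, for each choice of sign, \[ C_{m,\ell}^{2K}(q)\pm C_{2K-m,\ell}^{2K}(q) =\frac{q^{s(m,\ell,2K)}}{J_{1}^3}\Big ( f_{K+1,K+1,1}\big(\pm q^{1+\frac{1}{2}(K+\ell)},q^{1+\frac{1}{2}(m+\ell)},q\big) \pm q^{\frac{1}{2}(K-\ell)}f_{K+1,K+1,1}\big(\pm q^{1+\frac{1}{2}(3K-\ell)},q^{1+K+\frac{1}{2}(m-\ell)},q\big)\Big), \] where the sign $\pm$ is the same in all three places.
   Context: Let $q=e^{2\pi i\tau}$ with $\operatorname{Im}\tau>0$, and for real $\alpha$ put $q^{\alpha}:=e^{2\pi i\alpha\tau}$. For $x\in\mathbb{C}^*$, $j(x;q):=\sum_{n\in\mathbb{Z}}(-1)^nq^{n(n-1)/2}x^n$, and $J_1:=\prod_{i\ge1}(1-q^i)$. For positive integers $a,b,c$ and $x,y\in\mathbb{C}^*$, the Hecke-type double-sum is $f_{a,b,c}(x,y,q):=\Big(\sum_{r,s\ge0}-\sum_{r,s<0}\Big)(-1)^{r+s}x^ry^sq^{a\binom{r}{2}+brs+c\binom{s}{2}}$. For a positive integer $N$ and integers $m,\ell$ with $0\le\ell\le N$, $m\equiv\ell\pmod 2$, put $s(m,\ell,N):=-\frac18+\frac{(\ell+1)^2}{4(N+2)}-\frac{m^2}{4N}$. The level-$N$ $A_1^{(1)}$ string function is given by the Hecke-type expression $C_{m,\ell}^{N}(q)=\dfrac{q^{s(m,\ell,N)}}{J_1^3}\,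 f_{1,1+N,1}\big(q^{1+\frac12(m+\ell)},q^{1-\frac12(m-\ell)},q\big)$ (this may be taken as the definition of $C^N_{m,\ell}$). *)

theory Defs
  imports "HOL-Analysis.Analysis"
begin

text \<open>Real powers of the nome: q^alpha := exp(2 pi i alpha tau).\<close>
definition qpow :: "complex \<Rightarrow> real \<Rightarrow> complex" where
  "qpow \<tau> \<alpha> = exp (2 * of_real pi * \<i> * of_real \<alpha> * \<tau>)"

definition nome :: "complex \<Rightarrow> complex" where
  "nome \<tau> = qpow \<tau> 1"

definition J1 :: "complex \<Rightarrow> complex" where
  "J1 \<tau> = (\<Prod>i. 1 - nome \<tau> ^ Suc i)"

text \<open>Hecke-type double sum f_{a,b,c}(x,y,q), q = nome tau;
  q^(a binom(r,2) + b r s + c binom(s,2)) is an integral power of q.\<close>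
definition hecke_term :: "nat \<Rightarrow> nat \<Rightarrow> nat \<Rightarrow> complex \<Rightarrow> complex \<Rightarrow> complex \<Rightarrow> int \<times> int \<Rightarrow> complex" where
  "hecke_term a b c x y \<tau> = (\<lambda>(r, s). (-1) powi (r + s) * x powi r * y powi s *
      qpow \<tau> (of_int (int a * (r * (r - 1) div 2) + int b * r * s + int c * (s * (s - 1) div 2))))"

definition hecke_f :: "nat \<Rightarrow> nat \<Rightarrow> nat \<Rightarrow> complex \<Rightarrow> complex \<Rightarrow> complex \<Rightarrow> complex" where
  "hecke_f a b c x y \<tau> =
     (\<Sum>\<^sub>\<infinity> p \<in> {p :: int \<times> int. fst p \<ge> 0 \<and> snd p \<ge> 0}. hecke_term a b c x y \<tau> p)
   - (\<Sum>\<^sub>\<infinity> p \<in> {p :: int \<times> int. fst p < 0 \<and> snd p < 0}. hecke_term a b c x y \<tau> p)"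

definition s_exp :: "int \<Rightarrow> int \<Rightarrow> nat \<Rightarrow> real" where
  "s_exp m l N = - 1/8 + (of_int l + 1)^2 / (4 * (of_nat N + 2)) - (of_int m)^2 / (4 * of_nat N)"

definition string_fn :: "nat \<Rightarrow> int \<Rightarrow> int \<Rightarrow> complex \<Rightarrow> complex" where
  "string_fn N m l \<tau> = qpow \<tau> (s_exp m l N) / (J1 \<tau>) ^ 3 *
     hecke_f 1 (1 + N) 1 (qpow \<tau> (1 + (of_int m + of_int l) / 2)) (qpow \<tau> (1 - (of_int m - of_int l) / 2)) \<tau>"

end

theory Submission
  imports Defs
begin

lemma qpow_mult: "qpow t a * qpow t b = qpow t (a + b)"
  unfolding qpow_def by (simp add: exp_add[symmetric] algebra_simps)

lemma qpow_powi: "qpow t a powi n = qpow t (a * of_int n)"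
  unfolding qpow_def by (simp add: exp_power_int algebra_simps)

lemma qpow_norm: "norm (qpow t a) = exp (- 2 * pi * Im t * a)"
  unfolding qpow_def by (simp add: norm_exp_eq_Re algebra_simps)

lemma qpow_nz: "qpow t a \<noteq> 0"
  unfolding qpow_def by simp

lemma tri_real: "real_of_int (r * (r - 1) div 2) = of_int r * (of_int r - 1) / 2"
proof -
  have "(2::int) dvd r * (r - 1)" by simp
  then show ?thesis by (simp add: real_of_int_div)
qed

definition Eexp :: "nat \<Rightarrow> nat \<Rightarrow> nat \<Rightarrow> real \<Rightarrow> real \<Rightarrow> int \<Rightarrow> int \<Rightarrow> real" where
  "Eexp a b c al be r s = al * of_int r + be * of_int s + real a * (of_int r * (of_int r - 1) / 2)
     + real b * of_int r * of_int s + real c * (of_int s * (of_int s - 1) / 2)"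

lemma hecke_term_eval:
  "hecke_term a b c (e * qpow t al) (qpow t be) t (r, s) =
     (-1) powi (r + s) * e powi r * qpow t (Eexp a b c al be r s)"
proof -
  have "hecke_term a b c (e * qpow t al) (qpow t be) t (r, s) =
     (-1) powi (r + s) * e powi r * (qpow t (al * of_int r) * qpow t (be * of_int s) *
      qpow t (of_int (int a * (r * (r - 1) div 2) + int b * r * s + int c * (s * (s - 1) div 2))))"
    unfolding hecke_term_def by (simp add: power_int_mult_distrib qpow_powi mult_ac)
  also have "qpow t (al * of_int r) * qpow t (be * of_int s) *
      qpow t (of_int (int a * (r * (r - 1) div 2) + int b * r * s + int c * (s * (s - 1) div 2)))
     = qpow t (Eexp a b c al be r s)"
    unfolding qpow_mult of_int_add of_int_mult tri_real
    by (rule arg_cong[where f="qpow t"]) (simp add: Eexp_def algebra_simps)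
  finally show ?thesis .
qed

lemma hecke_term_eval1:
  "hecke_term a b c (qpow t al) (qpow t be) t (r, s) =
     (-1) powi (r + s) * qpow t (Eexp a b c al be r s)"
  using hecke_term_eval[of a b c 1 t al be r s] by simp

lemma sum1:
  fixes u k :: real
  assumes u: "u > 0" and k: "k > 0"
  shows "summable (\<lambda>n::nat. u ^ n * exp (- k * (real n * (real n - 1) / 2)))"
proof -
  define f where "f = (\<lambda>n::nat. u ^ n * exp (- k * (real n * (real n - 1) / 2)))"
  have "(\<lambda>n. u * exp (- k) ^ n) \<longlonglongrightarrow> u * 0"
    by (intro tendsto_mult tendsto_const LIMSEQ_power_zero) (use k in auto)
  then have "\<forall>\<^sub>F n in sequentially. u * exp (- k) ^ n < 1/2"
    by (intro order_tendstoD) auto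
  then obtain N where N: "\<And>n. n \<ge> N \<Longrightarrow> u * exp (- k) ^ n < 1/2"
    by (auto simp: eventually_sequentially)
  have "summable f"
  proof (rule summable_ratio_test[where c = "1/2" and N = N])
    fix n assume "n \<ge> N"
    have e: "f (Suc n) = f n * (u * exp (- k) ^ n)"
    proof -
      have x: "- k * (real (Suc n) * (real (Suc n) - 1) / 2) = - k * (real n * (real n - 1) / 2) + real n * (- k)"
        unfolding of_nat_Suc by (simp add: field_simps)
      show ?thesis unfolding f_def x exp_add exp_of_nat_mult by (simp add: mult_ac)
    qed
    have "f n \<ge> 0" unfolding f_def using u by simp
    have p: "u * exp (- k) ^ n \<ge> 0" using u by simp
    have "f n * (u * exp (- k) ^ n) \<le> f n * (1/2)"
      using N[OF \<open>n \<ge> N\<close>] \<open>f n \<ge> 0\<close> by (intro mult_left_mono) auto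
    then show "norm (f (Suc n)) \<le> 1/2 * norm (f n)"
      unfolding e using \<open>f n \<ge> 0\<close> p u by (simp add: abs_mult)
  qed simp
  then show ?thesis unfolding f_def .
qed

lemma int1:
  fixes u k :: real
  assumes u: "u > 0" and k: "k > 0"
  shows "(\<lambda>r::int. u powi r * exp (- k * (of_int r * (of_int r - 1) / 2))) summable_on UNIV"
proof -
  define g where "g = (\<lambda>r::int. u powi r * exp (- k * (of_int r * (of_int r - 1) / 2)))"
  define h where "h = (\<lambda>n::nat. - int n - 1)"
  have U: "(UNIV :: int set) = range int \<union> range h"
  proof -
    have "x \<in> range int \<union> range h" for x :: int
    proof (cases "x \<ge> 0")
      case True then show ?thesis by (metis UnI1 nonneg_int_cases rangeI)
    next
      case False
      then have "x = h (nat (- x - 1))" unfolding h_def by simp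
      then show ?thesis by blast
    qed
    then show ?thesis by blast
  qed
  have D: "range int \<inter> range h = {}" unfolding h_def by auto
  have P: "g summable_on range int"
  proof -
    have "(g \<circ> int) = (\<lambda>n::nat. u ^ n * exp (- k * (real n * (real n - 1) / 2)))"
      unfolding g_def by (simp add: fun_eq_iff)
    moreover have "(\<lambda>n::nat. u ^ n * exp (- k * (real n * (real n - 1) / 2))) summable_on UNIV"
      using sum1[OF u k] u by (subst summable_on_UNIV_nonneg_real_iff) auto
    ultimately show ?thesis by (simp add: summable_on_reindex)
  qed
  have Q: "g summable_on range h"
  proof -
    define v where "v = exp (- k) / u"
    have v: "v > 0" unfolding v_def using u by simp
    have e: "(g \<circ> h) n = (\<lambda>n. v ^ n * exp (- k * (real n * (real n - 1) / 2))) (Suc n)" for n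
    proof -
      have a: "u powi (- int n - 1) = inverse (u ^ Suc n)"
      proof -
        have "- int n - 1 = - int (Suc n)" by simp
        then show ?thesis by (simp only: power_int_minus power_int_of_nat)
      qed
      have b: "v ^ Suc n = inverse (u ^ Suc n) * exp (real (Suc n) * (- k))"
        unfolding v_def exp_of_nat_mult divide_inverse power_mult_distrib power_inverse by (simp only: mult.commute)
      have c: "- k * (real_of_int (- int n - 1) * (real_of_int (- int n - 1) - 1) / 2) =
              real (Suc n) * (- k) + - k * (real (Suc n) * (real (Suc n) - 1) / 2)"
        unfolding of_nat_Suc by (simp add: field_simps)
      show ?thesis unfolding g_def h_def o_def a b c exp_add by (simp add: mult_ac)
    qed
    have "summable (\<lambda>n. v ^ Suc n * exp (- k * (real (Suc n) * (real (Suc n) - 1) / 2)))"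
      using sum1[OF v k] by (subst summable_Suc_iff)
    then have "(g \<circ> h) summable_on UNIV"
      unfolding e using v by (subst summable_on_UNIV_nonneg_real_iff) auto
    moreover have "inj h" unfolding h_def by (auto intro: injI)
    ultimately show ?thesis by (simp add: summable_on_reindex)
  qed
  have "g summable_on (range int \<union> range h)" by (rule summable_on_Un_disjoint[OF P Q D])
  then show ?thesis unfolding g_def[symmetric] U[symmetric] .
qed

lemma prod_summ:
  fixes G H :: "int \<Rightarrow> real"
  assumes G: "G summable_on UNIV" and H: "H summable_on UNIV"
    and G0: "\<And>r. G r \<ge> 0" and H0: "\<And>s. H s \<ge> 0"
  shows "Infinite_Sum.abs_summable_on ((\<lambda>p. G (fst p) * H (snd p))) UNIV"
proof -
  have "Infinite_Sum.abs_summable_on ((\<lambda>p. G (fst p) * H (snd p))) (Sigma UNIV (\<lambda>_. UNIV))"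
  proof (subst Infinite_Sum.abs_summable_on_Sigma_iff, intro conjI ballI)
    fix r :: int
    show "Infinite_Sum.abs_summable_on ((\<lambda>s. G (fst (r, s)) * H (snd (r, s)))) UNIV"
      using summable_on_cmult_right[OF H, of "G r"] G0 H0 by (simp add: abs_mult)
  next
    have "\<And>r. infsum (\<lambda>s. norm (G (fst (r, s)) * H (snd (r, s)))) UNIV = G r * infsum H UNIV"
      using G0 H0 by (simp add: abs_mult infsum_cmult_right')
    moreover have "Infinite_Sum.abs_summable_on ((\<lambda>r. G r * infsum H UNIV)) UNIV"
    proof -
      have "infsum H UNIV \<ge> 0" using H0 by (simp add: infsum_nonneg)
      then show ?thesis using summable_on_cmult_left[OF G, of "infsum H UNIV"] G0 by (simp add: abs_mult)
    qed
    ultimately show "Infinite_Sum.abs_summable_on ((\<lambda>r. infsum (\<lambda>s. norm (G (fst (r, s)) * H (snd (r, s)))) UNIV)) UNIV"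
      by simp
  qed
  then show ?thesis by simp
qed

lemma tri_nonneg: "0 \<le> (of_int r :: real) * (of_int r - 1) / 2"
proof -
  have "0 \<le> r * (r - 1)"
    by (cases "r \<le> 0") (auto intro: mult_nonpos_nonpos mult_nonneg_nonneg)
  then have "0 \<le> real_of_int (r * (r - 1))" by linarith
  then show ?thesis by simp
qed

lemma hecke_norm:
  "norm (hecke_term a b c x y t (r, s)) = norm x powi r * norm y powi s *
     exp (- (2 * pi * Im t) * (real a * (of_int r * (of_int r - 1) / 2) + real b * of_int r * of_int s
        + real c * (of_int s * (of_int s - 1) / 2)))"
  apply (simp only: hecke_term_def prod.case norm_mult norm_power_int qpow_norm of_int_add of_int_mult
      of_int_of_nat_eq tri_real)
  apply (simp add: algebra_simps)
  done

lemma hecke_summable: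
  assumes a: "a \<ge> 1" and c: "c \<ge> 1" and x: "x \<noteq> 0" and y: "y \<noteq> 0" and t: "Im t > 0"
    and S: "S \<subseteq> {p. fst p * snd p \<ge> 0}"
  shows "hecke_term a b c x y t summable_on S"
proof -
  define k where "k = 2 * pi * Im t"
  have k: "k > 0" unfolding k_def using t by simp
  define G where "G = (\<lambda>r::int. norm x powi r * exp (- k * (of_int r * (of_int r - 1) / 2)))"
  define H where "H = (\<lambda>r::int. norm y powi r * exp (- k * (of_int r * (of_int r - 1) / 2)))"
  have Gs: "G summable_on UNIV" unfolding G_def by (rule int1) (use x k in auto)
  have Hs: "H summable_on UNIV" unfolding H_def by (rule int1) (use y k in auto)
  have GH: "Infinite_Sum.abs_summable_on ((\<lambda>p. G (fst p) * H (snd p))) UNIV"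
    by (rule prod_summ[OF Gs Hs]) (auto simp: G_def H_def)
  have "Infinite_Sum.abs_summable_on (hecke_term a b c x y t) S"
  proof (rule Infinite_Sum.abs_summable_on_comparison_test)
    show "Infinite_Sum.abs_summable_on ((\<lambda>p. G (fst p) * H (snd p))) S"
      using GH summable_on_subset_banach by blast
  next
    fix p assume "p \<in> S"
    obtain r s where p: "p = (r, s)" by fastforce
    have rs: "real_of_int r * real_of_int s \<ge> 0"
      using \<open>p \<in> S\<close> S p by (metis (mono_tags, lifting) fst_conv mem_Collect_eq of_int_0_le_iff of_int_mult snd_conv subsetD)
    define A where "A = (of_int r * (of_int r - 1) / 2 :: real)"
    define B where "B = (of_int s * (of_int s - 1) / 2 :: real)"
    have A0: "A \<ge> 0" and B0: "B \<ge> 0" unfolding A_def B_def by (rule tri_nonneg)+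
    have "A \<le> real a * A" using A0 a by (simp add: mult_le_cancel_right1)
    moreover have "B \<le> real c * B" using B0 c by (simp add: mult_le_cancel_right1)
    moreover have "0 \<le> real b * of_int r * of_int s" using rs by (simp add: mult.assoc)
    ultimately have E: "A + B \<le> real a * A + real b * of_int r * of_int s + real c * B" by linarith
    have "k * (A + B) \<le> k * (real a * A + real b * of_int r * of_int s + real c * B)"
      using E k by (intro mult_left_mono) auto
    then have "- k * (real a * A + real b * of_int r * of_int s + real c * B) \<le> - k * A + - k * B"
      by (simp add: algebra_simps)
    then have "exp (- k * (real a * A + real b * of_int r * of_int s + real c * B)) \<le> exp (- k * A) * exp (- k * B)"
      unfolding exp_add[symmetric] by simp
    then have "norm x powi r * norm y powi s * exp (- k * (real a * A + real b * of_int r * of_int s + real c * B))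
        \<le> norm x powi r * norm y powi s * (exp (- k * A) * exp (- k * B))"
      by (intro mult_left_mono) auto
    moreover have "norm (G (fst p) * H (snd p)) = norm x powi r * norm y powi s * (exp (- k * A) * exp (- k * B))"
      unfolding p G_def H_def A_def B_def by (simp add: abs_mult mult_ac)
    moreover have "norm (hecke_term a b c x y t p) = norm x powi r * norm y powi s * exp (- k * (real a * A + real b * of_int r * of_int s + real c * B))"
      unfolding p hecke_norm k_def A_def B_def by simp
    ultimately show "norm (hecke_term a b c x y t p) \<le> norm (G (fst p) * H (snd p))"
      by simp
  qed
  then show ?thesis by (rule abs_summable_summable)
qed

lemma pm1: "(-1::complex) powi n = (if even n then 1 else -1)"
  by (simp add: power_int_minus_left)

lemma epsp: "\<epsilon> = 1 \<or> \<epsilon> = -1 \<Longrightarrow> (\<epsilon>::complex) powi n = (if even n then 1 else \<epsilon>)"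
  by (auto simp: pm1)

lemma I1:
  fixes K :: nat and m l r s :: int and \<epsilon> t :: complex
  assumes e: "\<epsilon> = 1 \<or> \<epsilon> = -1"
  shows "hecke_term (K + 1) (K + 1) 1 (\<epsilon> * qpow t (1 + (of_nat K + of_int l) / 2))
            (qpow t (1 + (of_int m + of_int l) / 2)) t (2 * s, r - s) =
         hecke_term 1 (1 + 2 * K) 1 (qpow t (1 + (of_int m + of_int l) / 2))
            (qpow t (1 - (of_int m - of_int l) / 2)) t (r, s)"
proof -
  have E: "Eexp (K + 1) (K + 1) 1 (1 + (of_nat K + of_int l) / 2) (1 + (of_int m + of_int l) / 2) (2 * s) (r - s)
     = Eexp 1 (1 + 2 * K) 1 (1 + (of_int m + of_int l) / 2) (1 - (of_int m - of_int l) / 2) r s"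
    unfolding Eexp_def by (simp add: field_simps)
  have S: "(-1::complex) powi (2 * s + (r - s)) * \<epsilon> powi (2 * s) = (-1) powi (r + s)"
    using e by (auto simp: pm1)
  show ?thesis unfolding hecke_term_eval hecke_term_eval1 E S by (rule refl)
qed

lemma I2:
  fixes K :: nat and m l r s :: int and \<epsilon> t :: complex
  assumes e: "\<epsilon> = 1 \<or> \<epsilon> = -1"
  shows "hecke_term (K + 1) (K + 1) 1 (\<epsilon> * qpow t (1 + (of_nat K + of_int l) / 2))
            (qpow t (1 + (of_int m + of_int l) / 2)) t (2 * r - 1, s - r + 1) =
         \<epsilon> * qpow t ((of_int m - of_nat K) / 2) *
         hecke_term 1 (1 + 2 * K) 1 (qpow t (1 + (of_int (2 * int K - m) + of_int l) / 2))
            (qpow t (1 - (of_int (2 * int K - m) - of_int l) / 2)) t (r, s)"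
proof -
  have E: "Eexp (K + 1) (K + 1) 1 (1 + (of_nat K + of_int l) / 2) (1 + (of_int m + of_int l) / 2) (2 * r - 1) (s - r + 1)
     = (of_int m - of_nat K) / 2 + Eexp 1 (1 + 2 * K) 1 (1 + (of_int (2 * int K - m) + of_int l) / 2)
            (1 - (of_int (2 * int K - m) - of_int l) / 2) r s"
    unfolding Eexp_def by (simp add: field_simps)
  have S: "(-1::complex) powi (2 * r - 1 + (s - r + 1)) * \<epsilon> powi (2 * r - 1) = \<epsilon> * (-1) powi (r + s)"
    using e by (auto simp: pm1)
  have Q: "qpow t ((of_int m - of_nat K) / 2 + X) = qpow t ((of_int m - of_nat K) / 2) * qpow t X" for X
    by (rule qpow_mult[symmetric])
  show ?thesis unfolding hecke_term_eval hecke_term_eval1 E S Q by (simp only: mult_ac)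
qed

lemma I3:
  fixes K :: nat and m l r s :: int and \<epsilon> t :: complex
  assumes e: "\<epsilon> = 1 \<or> \<epsilon> = -1"
  shows "hecke_term (K + 1) (K + 1) 1 (\<epsilon> * qpow t (1 + (of_nat K + of_int l) / 2))
            (qpow t (1 + (of_int m + of_int l) / 2)) t (- r - 2 * s - 1, s) =
         - (\<epsilon> * qpow t ((of_nat K - of_int l) / 2) *
         hecke_term (K + 1) (K + 1) 1 (\<epsilon> * qpow t (1 + (3 * of_nat K - of_int l) / 2))
            (qpow t (1 + of_nat K + (of_int m - of_int l) / 2)) t (r, s))"
proof -
  have E: "Eexp (K + 1) (K + 1) 1 (1 + (of_nat K + of_int l) / 2) (1 + (of_int m + of_int l) / 2) (- r - 2 * s - 1) s
     = (of_nat K - of_int l) / 2 + Eexp (K + 1) (K + 1) 1 (1 + (3 * of_nat K - of_int l) / 2)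
            (1 + of_nat K + (of_int m - of_int l) / 2) r s"
    unfolding Eexp_def by (simp add: field_simps)
  have S: "(-1::complex) powi (- r - 2 * s - 1 + s) * \<epsilon> powi (- r - 2 * s - 1) = - (\<epsilon> * ((-1) powi (r + s) * \<epsilon> powi r))"
    using e by (auto simp: pm1)
  have Q: "qpow t ((of_nat K - of_int l) / 2 + X) = qpow t ((of_nat K - of_int l) / 2) * qpow t X" for X
    by (rule qpow_mult[symmetric])
  show ?thesis unfolding hecke_term_eval E S Q by (simp only: mult_ac mult_minus_left mult_minus_right)
qed

lemma I4:
  fixes K :: nat and m l S :: int and \<epsilon> t :: complex
  assumes e: "\<epsilon> = 1 \<or> \<epsilon> = -1" and ev: "even (m - l)"
  shows "hecke_term (K + 1) (K + 1) 1 (\<epsilon> * qpow t (1 + (of_nat K + of_int l) / 2))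
            (qpow t (1 + (of_int m + of_int l) / 2)) t (-1, (1 - (m + l) + 2 * int K) - S) =
       - hecke_term (K + 1) (K + 1) 1 (\<epsilon> * qpow t (1 + (of_nat K + of_int l) / 2))
            (qpow t (1 + (of_int m + of_int l) / 2)) t (-1, S)"
proof -
  have E: "Eexp (K + 1) (K + 1) 1 (1 + (of_nat K + of_int l) / 2) (1 + (of_int m + of_int l) / 2) (-1) ((1 - (m + l) + 2 * int K) - S)
     = Eexp (K + 1) (K + 1) 1 (1 + (of_nat K + of_int l) / 2) (1 + (of_int m + of_int l) / 2) (-1) S"
    unfolding Eexp_def by (simp add: field_simps)
  have o: "odd (1 - (m + l) + 2 * int K)" using ev by simp
  have S: "(-1::complex) powi (-1 + ((1 - (m + l) + 2 * int K) - S)) = - ((-1) powi (-1 + S))"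
    using o by (auto simp: pm1)
  show ?thesis unfolding hecke_term_eval E S by simp
qed

lemma kappa:
  fixes R S :: int
  shows "of_bool (even R \<and> R \<ge> 0 \<and> R + 2*S \<ge> 0) + of_bool (odd R \<and> R \<ge> -1 \<and> R + 2*S \<ge> 1)
    - of_bool (even R \<and> R < 0 \<and> R + 2*S \<le> -2) - of_bool (odd R \<and> R \<le> -3 \<and> R + 2*S \<le> -1)
    - of_bool (R \<ge> 0 \<and> S \<ge> 0) + of_bool (R < 0 \<and> S < 0)
    + of_bool (S \<ge> 0 \<and> R + 2*S \<le> -1) - of_bool (S < 0 \<and> R + 2*S \<ge> 0) = (of_bool (R = -1) :: int)"
proof (cases "even R")
  case True
  then obtain k where k: "R = 2 * k" by (auto elim: evenE)
  show ?thesis unfolding k by (auto; presburger)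
next
  case False
  then obtain k where k: "R = 2 * k + 1" by (auto elim: oddE)
  show ?thesis unfolding k by (auto; presburger)
qed

lemma mphiCp: "x \<in> (\<lambda>p::int\<times>int. (2 * snd p, fst p - snd p)) ` {p. fst p \<ge> 0 \<and> snd p \<ge> 0}
   \<longleftrightarrow> (even (fst x) \<and> fst x \<ge> 0 \<and> fst x + 2 * snd x \<ge> 0)"
proof
  assume h: "even (fst x) \<and> fst x \<ge> 0 \<and> fst x + 2 * snd x \<ge> 0"
  then obtain k where k: "fst x = 2 * k" by (auto elim: evenE)
  show "x \<in> (\<lambda>p::int\<times>int. (2 * snd p, fst p - snd p)) ` {p. fst p \<ge> 0 \<and> snd p \<ge> 0}"
    by (rule image_eqI[where x = "(snd x + k, k)"]) (use h k in \<open>auto simp: prod_eq_iff\<close>)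
qed auto

lemma mphiCn: "x \<in> (\<lambda>p::int\<times>int. (2 * snd p, fst p - snd p)) ` {p. fst p < 0 \<and> snd p < 0}
   \<longleftrightarrow> (even (fst x) \<and> fst x < 0 \<and> fst x + 2 * snd x \<le> -2)"
proof
  assume h: "even (fst x) \<and> fst x < 0 \<and> fst x + 2 * snd x \<le> -2"
  then obtain k where k: "fst x = 2 * k" by (auto elim: evenE)
  show "x \<in> (\<lambda>p::int\<times>int. (2 * snd p, fst p - snd p)) ` {p. fst p < 0 \<and> snd p < 0}"
    by (rule image_eqI[where x = "(snd x + k, k)"]) (use h k in \<open>auto simp: prod_eq_iff\<close>)
qed auto

lemma mpsiCp: "x \<in> (\<lambda>p::int\<times>int. (2 * fst p - 1, snd p - fst p + 1)) ` {p. fst p \<ge> 0 \<and> snd p \<ge> 0}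
   \<longleftrightarrow> (odd (fst x) \<and> fst x \<ge> -1 \<and> fst x + 2 * snd x \<ge> 1)"
proof
  assume h: "odd (fst x) \<and> fst x \<ge> -1 \<and> fst x + 2 * snd x \<ge> 1"
  then obtain k where k: "fst x = 2 * k + 1" by (auto elim: oddE)
  show "x \<in> (\<lambda>p::int\<times>int. (2 * fst p - 1, snd p - fst p + 1)) ` {p. fst p \<ge> 0 \<and> snd p \<ge> 0}"
    by (rule image_eqI[where x = "(k + 1, snd x + k)"]) (use h k in \<open>auto simp: prod_eq_iff\<close>)
qed auto

lemma mpsiCn: "x \<in> (\<lambda>p::int\<times>int. (2 * fst p - 1, snd p - fst p + 1)) ` {p. fst p < 0 \<and> snd p < 0}
   \<longleftrightarrow> (odd (fst x) \<and> fst x \<le> -3 \<and> fst x + 2 * snd x \<le> -1)"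
proof
  assume h: "odd (fst x) \<and> fst x \<le> -3 \<and> fst x + 2 * snd x \<le> -1"
  then obtain k where k: "fst x = 2 * k + 1" by (auto elim: oddE)
  show "x \<in> (\<lambda>p::int\<times>int. (2 * fst p - 1, snd p - fst p + 1)) ` {p. fst p < 0 \<and> snd p < 0}"
    by (rule image_eqI[where x = "(k + 1, snd x + k)"]) (use h k in \<open>auto simp: prod_eq_iff\<close>)
next
  assume "x \<in> (\<lambda>p::int\<times>int. (2 * fst p - 1, snd p - fst p + 1)) ` {p. fst p < 0 \<and> snd p < 0}"
  then show "odd (fst x) \<and> fst x \<le> -3 \<and> fst x + 2 * snd x \<le> -1" by auto
qed

lemma mchiCp: "x \<in> (\<lambda>p::int\<times>int. (- fst p - 2 * snd p - 1, snd p)) ` {p. fst p \<ge> 0 \<and> snd p \<ge> 0}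
   \<longleftrightarrow> (snd x \<ge> 0 \<and> fst x + 2 * snd x \<le> -1)"
proof
  assume h: "snd x \<ge> 0 \<and> fst x + 2 * snd x \<le> -1"
  show "x \<in> (\<lambda>p::int\<times>int. (- fst p - 2 * snd p - 1, snd p)) ` {p. fst p \<ge> 0 \<and> snd p \<ge> 0}"
    by (rule image_eqI[where x = "(- fst x - 2 * snd x - 1, snd x)"]) (use h in \<open>auto simp: prod_eq_iff\<close>)
qed auto

lemma mchiCn: "x \<in> (\<lambda>p::int\<times>int. (- fst p - 2 * snd p - 1, snd p)) ` {p. fst p < 0 \<and> snd p < 0}
   \<longleftrightarrow> (snd x < 0 \<and> fst x + 2 * snd x \<ge> 0)"
proof
  assume h: "snd x < 0 \<and> fst x + 2 * snd x \<ge> 0"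
  show "x \<in> (\<lambda>p::int\<times>int. (- fst p - 2 * snd p - 1, snd p)) ` {p. fst p < 0 \<and> snd p < 0}"
    by (rule image_eqI[where x = "(- fst x - 2 * snd x - 1, snd x)"]) (use h in \<open>auto simp: prod_eq_iff\<close>)
qed auto

lemma line_zero:
  fixes T :: "int \<times> int \<Rightarrow> complex" and j :: int
  assumes h: "\<And>S. T (-1, j - S) = - T (-1, S)"
  shows "infsum T {p. fst p = -1} = 0"
proof -
  define th where "th = (\<lambda>S. T (-1, S))"
  have Ln: "{p::int\<times>int. fst p = -1} = range (\<lambda>S. (-1, S))" by (auto simp: image_def prod_eq_iff)
  have "infsum T {p. fst p = -1} = infsum th UNIV"
    unfolding Ln th_def by (subst infsum_reindex) (auto simp: inj_on_def o_def)
  moreover have "infsum th UNIV = - infsum th UNIV"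
  proof -
    have r: "range (\<lambda>S. j - S) = (UNIV :: int set)"
      by (auto simp: image_def intro: exI[where x = "j - _"])
    have "infsum th UNIV = infsum th (range (\<lambda>S. j - S))" unfolding r ..
    also have "\<dots> = infsum (th \<circ> (\<lambda>S. j - S)) UNIV" by (rule infsum_reindex) (auto simp: inj_on_def)
    also have "\<dots> = infsum (\<lambda>S. - th S) UNIV" unfolding th_def o_def h ..
    also have "\<dots> = - infsum th UNIV" by (rule infsum_uminus)
    finally show ?thesis .
  qed
  ultimately show ?thesis by simp
qed

lemma restrict_has_sum:
  fixes T :: "'a \<Rightarrow> complex"
  assumes "T summable_on X"
  shows "((\<lambda>p. of_bool (p \<in> X) * T p) has_sum infsum T X) UNIV"
proof -
  have "(T has_sum infsum T X) X" using assms by simp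
  moreover have "(T has_sum infsum T X) X \<longleftrightarrow> ((\<lambda>p. of_bool (p \<in> X) * T p) has_sum infsum T X) UNIV"
    by (rule has_sum_cong_neutral) auto
  ultimately show ?thesis by simp
qed

lemma hneg: "(f has_sum a) A \<Longrightarrow> ((\<lambda>x. - f x) has_sum - (a::complex)) A"
  by (simp add: has_sum_uminus)

theorem core:
  fixes K :: nat and m l :: int and \<tau> \<epsilon> :: complex
  assumes t: "Im \<tau> > 0" and ev: "even (m - l)" and e: "\<epsilon> = 1 \<or> \<epsilon> = -1"
  shows "hecke_f 1 (1 + 2 * K) 1 (qpow \<tau> (1 + (of_int m + of_int l) / 2)) (qpow \<tau> (1 - (of_int m - of_int l) / 2)) \<tau>
    + \<epsilon> * qpow \<tau> ((of_int m - of_nat K) / 2) *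
      hecke_f 1 (1 + 2 * K) 1 (qpow \<tau> (1 + (of_int (2 * int K - m) + of_int l) / 2))
            (qpow \<tau> (1 - (of_int (2 * int K - m) - of_int l) / 2)) \<tau>
    = hecke_f (K + 1) (K + 1) 1 (\<epsilon> * qpow \<tau> (1 + (of_nat K + of_int l) / 2))
                                  (qpow \<tau> (1 + (of_int m + of_int l) / 2)) \<tau>
       + \<epsilon> * qpow \<tau> ((of_nat K - of_int l) / 2) *
         hecke_f (K + 1) (K + 1) 1 (\<epsilon> * qpow \<tau> (1 + (3 * of_nat K - of_int l) / 2))
                                  (qpow \<tau> (1 + of_nat K + (of_int m - of_int l) / 2)) \<tau>"
proof -
  define T where "T = hecke_term (K + 1) (K + 1) 1 (\<epsilon> * qpow \<tau> (1 + (of_nat K + of_int l) / 2))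
                                  (qpow \<tau> (1 + (of_int m + of_int l) / 2)) \<tau>"
  define L1 where "L1 = hecke_term 1 (1 + 2 * K) 1 (qpow \<tau> (1 + (of_int m + of_int l) / 2)) (qpow \<tau> (1 - (of_int m - of_int l) / 2)) \<tau>"
  define L2 where "L2 = hecke_term 1 (1 + 2 * K) 1 (qpow \<tau> (1 + (of_int (2 * int K - m) + of_int l) / 2))
            (qpow \<tau> (1 - (of_int (2 * int K - m) - of_int l) / 2)) \<tau>"
  define R2 where "R2 = hecke_term (K + 1) (K + 1) 1 (\<epsilon> * qpow \<tau> (1 + (3 * of_nat K - of_int l) / 2))
                                  (qpow \<tau> (1 + of_nat K + (of_int m - of_int l) / 2)) \<tau>"
  define c2 where "c2 = \<epsilon> * qpow \<tau> ((of_int m - of_nat K) / 2)"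
  define c3 where "c3 = \<epsilon> * qpow \<tau> ((of_nat K - of_int l) / 2)"
  define Cp where "Cp = {p :: int \<times> int. fst p \<ge> 0 \<and> snd p \<ge> 0}"
  define Cn where "Cn = {p :: int \<times> int. fst p < 0 \<and> snd p < 0}"
  define f1 where "f1 = (\<lambda>p::int\<times>int. (2 * snd p, fst p - snd p))"
  define f2 where "f2 = (\<lambda>p::int\<times>int. (2 * fst p - 1, snd p - fst p + 1))"
  define f3 where "f3 = (\<lambda>p::int\<times>int. (- fst p - 2 * snd p - 1, snd p))"
  have hf: "\<And>a b c x y. hecke_f a b c x y \<tau> = infsum (hecke_term a b c x y \<tau>) Cp - infsum (hecke_term a b c x y \<tau>) Cn"
    unfolding hecke_f_def Cp_def Cn_def ..
  have e0: "\<epsilon> \<noteq> 0" using e by auto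
  have cone: "Cp \<subseteq> {p. fst p * snd p \<ge> 0}" "Cn \<subseteq> {p. fst p * snd p \<ge> 0}"
    unfolding Cp_def Cn_def by (auto simp: zero_le_mult_iff)
  have eq1: "(T \<circ> f1) p = L1 p" for p
    by (cases p) (simp only: o_def f1_def fst_conv snd_conv T_def L1_def I1[OF e])
  have eq2: "(T \<circ> f2) p = c2 * L2 p" for p
    by (cases p) (simp only: o_def f2_def fst_conv snd_conv T_def L2_def c2_def I2[OF e])
  have eq3: "(T \<circ> f3) p = - (c3 * R2 p)" for p
    by (cases p) (simp only: o_def f3_def fst_conv snd_conv T_def R2_def c3_def I3[OF e])
  have ef1: "T \<circ> f1 = L1" by (rule ext) (rule eq1)
  have ef2: "T \<circ> f2 = (\<lambda>p. c2 * L2 p)" by (rule ext) (rule eq2)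
  have ef3: "T \<circ> f3 = (\<lambda>p. - (c3 * R2 p))" by (rule ext) (rule eq3)
  have injs: "inj f1" "inj f2" "inj f3" unfolding f1_def f2_def f3_def by (auto simp: inj_on_def prod_eq_iff)
  have sT: "T summable_on Cp" "T summable_on Cn"
    unfolding T_def by (rule hecke_summable; use cone t e0 qpow_nz in auto)+
  have sL1: "L1 summable_on Cp" "L1 summable_on Cn"
    unfolding L1_def by (rule hecke_summable; use cone t qpow_nz in auto)+
  have sL2: "L2 summable_on Cp" "L2 summable_on Cn"
    unfolding L2_def by (rule hecke_summable; use cone t qpow_nz in auto)+
  have sR2: "R2 summable_on Cp" "R2 summable_on Cn"
    unfolding R2_def by (rule hecke_summable; use cone t e0 qpow_nz in auto)+
  have sphi: "T summable_on f1 ` X" if "L1 summable_on X" for X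
    using that injs(1) ef1 by (simp add: summable_on_reindex inj_on_subset[of _ UNIV])
  have spsi: "T summable_on f2 ` X" if "L2 summable_on X" for X
  proof -
    have "(\<lambda>p. c2 * L2 p) summable_on X" using that by (rule summable_on_cmult_right)
    then have "(T \<circ> f2) summable_on X" unfolding ef2 .
    then show ?thesis using injs(2) by (simp add: summable_on_reindex inj_on_subset[of _ UNIV])
  qed
  have schi: "T summable_on f3 ` X" if "R2 summable_on X" for X
  proof -
    have "(\<lambda>p. - (c3 * R2 p)) summable_on X" using that by (simp add: summable_on_uminus summable_on_cmult_right)
    then have "(T \<circ> f3) summable_on X" unfolding ef3 .
    then show ?thesis using injs(3) by (simp add: summable_on_reindex inj_on_subset[of _ UNIV])
  qed
  have i1: "infsum T (f1 ` X) = infsum L1 X" for X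
    using injs(1) ef1 by (simp add: infsum_reindex inj_on_subset[of _ UNIV])
  have i2: "infsum T (f2 ` X) = c2 * infsum L2 X" for X
  proof -
    have "infsum T (f2 ` X) = infsum (T \<circ> f2) X" using injs(2) by (simp add: infsum_reindex inj_on_subset[of _ UNIV])
    also have "\<dots> = infsum (\<lambda>p. c2 * L2 p) X" unfolding ef2 ..
    also have "\<dots> = c2 * infsum L2 X" by (rule infsum_cmult_right')
    finally show ?thesis .
  qed
  have i3: "infsum T (f3 ` X) = - (c3 * infsum R2 X)" for X
  proof -
    have "infsum T (f3 ` X) = infsum (T \<circ> f3) X" using injs(3) by (simp add: infsum_reindex inj_on_subset[of _ UNIV])
    also have "\<dots> = infsum (\<lambda>p. - (c3 * R2 p)) X" unfolding ef3 ..
    also have "\<dots> = - (c3 * infsum R2 X)" by (simp add: infsum_uminus infsum_cmult_right')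
    finally show ?thesis .
  qed
  define V where "V = infsum T (f1 ` Cp) + infsum T (f2 ` Cp) - infsum T (f1 ` Cn) - infsum T (f2 ` Cn)
     - infsum T Cp + infsum T Cn + infsum T (f3 ` Cp) - infsum T (f3 ` Cn)"
  define ind where "ind = (\<lambda>X p. of_bool (p \<in> X) * T p)"
  have H: "((\<lambda>p. ind (f1 ` Cp) p + ind (f2 ` Cp) p + - ind (f1 ` Cn) p + - ind (f2 ` Cn) p
     + - ind Cp p + ind Cn p + ind (f3 ` Cp) p + - ind (f3 ` Cn) p) has_sum
     (infsum T (f1 ` Cp) + infsum T (f2 ` Cp) + - infsum T (f1 ` Cn) + - infsum T (f2 ` Cn)
     + - infsum T Cp + infsum T Cn + infsum T (f3 ` Cp) + - infsum T (f3 ` Cn))) UNIV"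
    unfolding ind_def
    by (intro has_sum_add hneg restrict_has_sum sphi spsi schi sL1 sL2 sR2 sT)
  have pt: "ind (f1 ` Cp) p + ind (f2 ` Cp) p + - ind (f1 ` Cn) p + - ind (f2 ` Cn) p
     + - ind Cp p + ind Cn p + ind (f3 ` Cp) p + - ind (f3 ` Cn) p = ind {p. fst p = -1} p" for p
  proof -
    obtain R S where p: "p = (R, S)" by fastforce
    have k: "(of_bool (p \<in> f1 ` Cp) + of_bool (p \<in> f2 ` Cp) - of_bool (p \<in> f1 ` Cn) - of_bool (p \<in> f2 ` Cn)
      - of_bool (p \<in> Cp) + of_bool (p \<in> Cn) + of_bool (p \<in> f3 ` Cp) - of_bool (p \<in> f3 ` Cn) :: int)
      = of_bool (p \<in> {p. fst p = -1})"
      unfolding f1_def f2_def f3_def Cp_def Cn_def mphiCp mphiCn mpsiCp mpsiCn mchiCp mchiCn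
      unfolding p fst_conv snd_conv mem_Collect_eq by (rule kappa)
    have k': "(of_bool (p \<in> f1 ` Cp) + of_bool (p \<in> f2 ` Cp) - of_bool (p \<in> f1 ` Cn) - of_bool (p \<in> f2 ` Cn)
      - of_bool (p \<in> Cp) + of_bool (p \<in> Cn) + of_bool (p \<in> f3 ` Cp) - of_bool (p \<in> f3 ` Cn) :: complex)
      = of_bool (p \<in> {p. fst p = -1})"
      using arg_cong[OF k, of "of_int :: int \<Rightarrow> complex"] by simp
    show ?thesis unfolding ind_def k'[symmetric] by (simp add: algebra_simps)
  qed
  have "(ind {p. fst p = -1} has_sum (infsum T (f1 ` Cp) + infsum T (f2 ` Cp) + - infsum T (f1 ` Cn) + - infsum T (f2 ` Cn)
     + - infsum T Cp + infsum T Cn + infsum T (f3 ` Cp) + - infsum T (f3 ` Cn))) UNIV"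
    using H unfolding pt .
  then have "(T has_sum (infsum T (f1 ` Cp) + infsum T (f2 ` Cp) + - infsum T (f1 ` Cn) + - infsum T (f2 ` Cn)
     + - infsum T Cp + infsum T Cn + infsum T (f3 ` Cp) + - infsum T (f3 ` Cn))) {p. fst p = -1}"
    unfolding ind_def by (subst has_sum_cong_neutral[where T = UNIV]) auto
  then have "infsum T {p. fst p = -1} = infsum T (f1 ` Cp) + infsum T (f2 ` Cp) + - infsum T (f1 ` Cn) + - infsum T (f2 ` Cn)
     + - infsum T Cp + infsum T Cn + infsum T (f3 ` Cp) + - infsum T (f3 ` Cn)"
    by (rule infsumI)
  moreover have "infsum T {p. fst p = -1} = 0"
    by (rule line_zero[where j = "1 - (m + l) + 2 * int K"]) (unfold T_def, rule I4[OF e ev])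
  ultimately have Z: "infsum T (f1 ` Cp) + infsum T (f2 ` Cp) - infsum T (f1 ` Cn) - infsum T (f2 ` Cn)
     = infsum T Cp - infsum T Cn - infsum T (f3 ` Cp) + infsum T (f3 ` Cn)"
    by (simp add: algebra_simps)
  show ?thesis
    unfolding hf c2_def[symmetric] c3_def[symmetric] L1_def[symmetric] L2_def[symmetric] R2_def[symmetric] T_def[symmetric]
    using Z unfolding i1 i2 i3 by (simp add: algebra_simps)
qed

lemma s_exp_refl:
  fixes K :: nat and m l :: int
  assumes K: "K > 0"
  shows "s_exp (2 * int K - m) l (2 * K) = s_exp m l (2 * K) + (of_int m - of_nat K) / 2"
proof -
  have k: "real K \<noteq> 0" using K by simp
  have a: "(of_int (2 * int K - m))^2 / (4 * real (2 * K)) = (of_int m)^2 / (4 * real (2 * K)) + (real K - of_int m) / 2"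
    using k by (simp add: field_simps power2_eq_square)
  show ?thesis unfolding s_exp_def a by (simp add: field_simps)
qed

theorem theorem1p1:
  fixes K :: nat and m l :: int and \<tau> \<epsilon> :: complex
  assumes "Im \<tau> > 0" and "K > 0" and "0 \<le> l" and "l \<le> 2 * int K" and "even (m - l)"
    and "\<epsilon> = 1 \<or> \<epsilon> = -1"
  shows "string_fn (2 * K) m l \<tau> + \<epsilon> * string_fn (2 * K) (2 * int K - m) l \<tau> =
    qpow \<tau> (s_exp m l (2 * K)) / (J1 \<tau>) ^ 3 *
      (hecke_f (K + 1) (K + 1) 1 (\<epsilon> * qpow \<tau> (1 + (of_nat K + of_int l) / 2))
                                  (qpow \<tau> (1 + (of_int m + of_int l) / 2)) \<tau>
       + \<epsilon> * qpow \<tau> ((of_nat K - of_int l) / 2) *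
         hecke_f (K + 1) (K + 1) 1 (\<epsilon> * qpow \<tau> (1 + (3 * of_nat K - of_int l) / 2))
                                  (qpow \<tau> (1 + of_nat K + (of_int m - of_int l) / 2)) \<tau>)"
proof -
  have C: "hecke_f 1 (1 + 2 * K) 1 (qpow \<tau> (1 + (of_int m + of_int l) / 2)) (qpow \<tau> (1 - (of_int m - of_int l) / 2)) \<tau>
    + \<epsilon> * qpow \<tau> ((of_int m - of_nat K) / 2) *
      hecke_f 1 (1 + 2 * K) 1 (qpow \<tau> (1 + (of_int (2 * int K - m) + of_int l) / 2))
            (qpow \<tau> (1 - (of_int (2 * int K - m) - of_int l) / 2)) \<tau>
    = hecke_f (K + 1) (K + 1) 1 (\<epsilon> * qpow \<tau> (1 + (of_nat K + of_int l) / 2))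
                                  (qpow \<tau> (1 + (of_int m + of_int l) / 2)) \<tau>
       + \<epsilon> * qpow \<tau> ((of_nat K - of_int l) / 2) *
         hecke_f (K + 1) (K + 1) 1 (\<epsilon> * qpow \<tau> (1 + (3 * of_nat K - of_int l) / 2))
                                  (qpow \<tau> (1 + of_nat K + (of_int m - of_int l) / 2)) \<tau>"
    by (rule core) (use assms in auto)
  have P: "qpow \<tau> (s_exp (2 * int K - m) l (2 * K)) = qpow \<tau> (s_exp m l (2 * K)) * qpow \<tau> ((of_int m - of_nat K) / 2)"
    unfolding s_exp_refl[OF \<open>K > 0\<close>] qpow_mult ..
  show ?thesis
    unfolding C[symmetric] string_fn_def P by (simp add: algebra_simps)
qed

end
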